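(* Let $X$ be a Banach space, let $\varepsilon\in(0,1)$ and let $T$ be an $\varepsilon$-hypercyclic bounded linear operator on $X$. Then $T$ is cyclic.
   Context: $T$ is $\varepsilon$-hypercyclic if there is $x\in X$ such that for every $y\in X\setminus\{0\}$ there is $n\in\mathbb{N}$ with $\|T^nx-y\|\le\varepsilon\|y\|$. $T$ is cyclic if there exists $x\in X$ such that the linear span of $\{T^nx:n\in\mathbb{N}\}$ is dense in $X$. *)

theory Defs
  imports "HOL-Analysis.Analysis"
begin

definition eps_hypercyclic :: "real \<Rightarrow> ('a::real_normed_vector \<Rightarrow> 'a) \<Rightarrow> bool" where
  "eps_hypercyclic \<epsilon> T \<longleftrightarrow>
     (\<exists>x. \<forall>y. y \<noteq> 0 \<longrightarrow> (\<exists>n::nat. norm ((T ^^ n) x - y) \<le> \<epsilon> * norm y))"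

definition cyclic :: "('a::real_normed_vector \<Rightarrow> 'a) \<Rightarrow> bool" where
  "cyclic T \<longleftrightarrow> (\<exists>x. closure (span (range (\<lambda>n::nat. (T ^^ n) x))) = UNIV)"

end

theory Submission
  imports Defs
begin

theorem proposition6p2:
  fixes T :: "'a::banach \<Rightarrow> 'a" and \<epsilon> :: real
  assumes "bounded_linear T"
    and "0 < \<epsilon>" and "\<epsilon> < 1"
    and "eps_hypercyclic \<epsilon> T"
  shows "cyclic T"
proof -
  obtain x where hx: "\<And>y. y \<noteq> 0 \<Longrightarrow> \<exists>n::nat. norm ((T ^^ n) x - y) \<le> \<epsilon> * norm y"
    using assms(4) unfolding eps_hypercyclic_def by blast
  let ?S = "span (range (\<lambda>n::nat. (T ^^ n) x))"
  have "closure ?S = UNIV"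
  proof (rule ccontr)
    assume "closure ?S \<noteq> UNIV"
    then obtain y where y: "y \<notin> closure ?S" by blast
    have ne: "?S \<noteq> {}" using span_zero by blast
    have d0: "infdist y (closure ?S) > 0"
      using infdist_pos_not_in_closed[of "closure ?S" y] y ne by auto
    have "infdist y (closure ?S) \<le> infdist y ?S"
      by (rule infdist_mono) (auto simp: closure_subset ne)
    with d0 have dpos: "infdist y ?S > 0" by linarith
    define d where "d = infdist y ?S"
    have dlt: "d < d / \<epsilon>" using dpos assms(2,3) unfolding d_def
      by (simp add: less_divide_eq)
    obtain m where m: "m \<in> ?S" "dist y m < d / \<epsilon>"
    proof (rule ccontr)
      assume "\<not> thesis"
      with that have "\<forall>a\<in>?S. d / \<epsilon> \<le> dist y a" by force
      hence "d / \<epsilon> \<le> infdist y ?S"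
        unfolding infdist_notempty[OF ne] by (intro cINF_greatest ne) auto
      with dlt show False unfolding d_def by simp
    qed
    define w where "w = y - m"
    have "w \<noteq> 0"
    proof
      assume "w = 0" hence "y = m" by (simp add: w_def)
      hence "y \<in> ?S" using m by simp
      hence "y \<in> closure ?S" using closure_subset by blast
      with y show False by simp
    qed
    then obtain n where n: "norm ((T ^^ n) x - w) \<le> \<epsilon> * norm w" using hx by blast
    have "\<epsilon> * norm w < d"
      using m(2) assms(2) by (simp add: w_def dist_norm pos_less_divide_eq mult.commute)
    moreover have "(T ^^ n) x \<in> ?S" by (simp add: span_base)
    hence "m + (T ^^ n) x \<in> ?S" using m(1) span_add by blast
    hence "d \<le> dist y (m + (T ^^ n) x)" unfolding d_def by (rule infdist_le)
    moreover have "dist y (m + (T ^^ n) x) = norm ((T ^^ n) x - w)"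
      by (simp add: w_def dist_norm norm_minus_commute algebra_simps)
    ultimately show False using n by linarith
  qed
  thus ?thesis unfolding cyclic_def by blast
qed

end
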